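(* Assume $x(0)=0$ and $x'(0)=0$. If $x(t)\to0$ and $x'(t)\to0$ as $t\to\infty$, then $y_1(t)\to0$ as $t\to\infty$.
   Context: Standing assumptions: $\omega>0$ is a constant; $p\in C^1([0,\infty))$ with $p(t)>0$ and $p'(t)<0$ for all $t\ge0$, $\int_0^\infty p(t)\,dt=\infty$ and $\int_0^\infty p(t)^2\,dt<\infty$; $f\in L^1_{\mathrm{loc}}([0,\infty))$. $x$ denotes the solution of $x''(t)+p(t)x'(t)+\omega^2x(t)=f(t)$, $t\ge0$. $y_1(t)=\int_0^te^{-\omega^2(t-s)}f(s)\,ds$, i.e. the solution of $y_1'=-\omega^2y_1+f$, $y_1(0)=0$. *)

theory Defs
  imports "HOL-Analysis.Analysis"
begin

end

theory Submission
  imports Defs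
begin


lemma abs_int_iff_lebesgue_on:
  fixes f :: "real \<Rightarrow> real"
  assumes "S \<in> sets lebesgue"
  shows "f absolutely_integrable_on S \<longleftrightarrow> integrable (lebesgue_on S) f"
  using assms integrable_restrict_space[of S lebesgue f]
  by (simp add: set_integrable_def)

lemma abs_int_integral_eq:
  fixes f :: "real \<Rightarrow> real"
  assumes "f absolutely_integrable_on {a..b}"
  shows "integral\<^sup>L (lebesgue_on {a..b}) f = integral {a..b} f"
  by (rule lebesgue_integral_eq_integral) (use assms abs_int_iff_lebesgue_on in auto)

lemma arith_aux:
  fixes A B G e c :: real
  assumes "B = e / c * G - A / c" "c > 0"
  shows "A = e * G - c * B"
proof -
  have "c * B = c * (e / c * G) - c * (A / c)" using assms(1) by (simp add: right_diff_distrib)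
  also have "\<dots> = e * G - A" using assms(2) by simp
  finally show ?thesis by simp
qed

lemma ibp_exp:
  fixes g :: "real \<Rightarrow> real" and c t :: real
  assumes c: "c > 0" and t: "t \<ge> 0" and gi: "g absolutely_integrable_on {0..t}"
  shows "integral {0..t} (\<lambda>s. exp (c * s) * g s) =
     exp (c * t) * integral {0..t} g - c * integral {0..t} (\<lambda>r. exp (c * r) * integral {0..r} g)"
proof -
  define M where "M = lebesgue_on {0..t}"
  interpret fm: finite_measure M
    unfolding M_def by (rule finite_measure_lebesgue_on) auto
  interpret P: pair_sigma_finite M M
    by (simp add: pair_sigma_finite_def fm.sigma_finite_measure_axioms)
  have spM: "space M = {0..t}" unfolding M_def by simp
  have gint: "integrable M g" using gi abs_int_iff_lebesgue_on unfolding M_def by auto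
  have gmeas[measurable]: "g \<in> borel_measurable M" using gint by auto
  have idm: "(\<lambda>x::real. x) \<in> borel_measurable M"
    unfolding M_def by (rule continuous_imp_measurable_on_sets_lebesgue) auto
  have fstm[measurable]: "(\<lambda>z. fst z) \<in> borel_measurable (M \<Otimes>\<^sub>M M)"
    by (rule measurable_compose[OF measurable_fst idm])
  have sndm[measurable]: "(\<lambda>z. snd z) \<in> borel_measurable (M \<Otimes>\<^sub>M M)"
    by (rule measurable_compose[OF measurable_snd idm])
  have gfm[measurable]: "(\<lambda>z. g (fst z)) \<in> borel_measurable (M \<Otimes>\<^sub>M M)"
    by (rule measurable_compose[OF measurable_fst gmeas])
  have pl1[measurable]: "Measurable.pred M (\<lambda>s. s \<le> r)" for r
    using borel_measurable_le[OF idm borel_measurable_const[of r]] by (simp add: pred_def)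
  have pl2[measurable]: "Measurable.pred M (\<lambda>s. r \<le> s)" for r
    using borel_measurable_le[OF borel_measurable_const[of r] idm] by (simp add: pred_def)
  have em[measurable]: "(\<lambda>s. exp (c * s)) \<in> borel_measurable M"
    unfolding M_def by (rule continuous_imp_measurable_on_sets_lebesgue) (intro continuous_intros, simp)
  define F where "F = (\<lambda>s r. if s \<le> r then exp (c * r) * g s else 0)"
  have Fmeas: "case_prod F \<in> borel_measurable (M \<Otimes>\<^sub>M M)"
    unfolding F_def case_prod_beta by measurable
  have Bint: "integrable (M \<Otimes>\<^sub>M M) (\<lambda>z. exp (c * t) * \<bar>g (fst z)\<bar>)"
  proof (rule P.Fubini_integrable)
    show "(\<lambda>z. exp (c * t) * \<bar>g (fst z)\<bar>) \<in> borel_measurable (M \<Otimes>\<^sub>M M)" by measurable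
    show "integrable M (\<lambda>x. \<integral>y. norm (exp (c * t) * \<bar>g (fst (x, y))\<bar>) \<partial>M)"
      using gint by simp
    show "AE x in M. integrable M (\<lambda>y. exp (c * t) * \<bar>g (fst (x, y))\<bar>)"
      by simp
  qed
  have Fint: "integrable (M \<Otimes>\<^sub>M M) (case_prod F)"
  proof (rule Bochner_Integration.integrable_bound[OF Bint Fmeas])
    show "AE z in M \<Otimes>\<^sub>M M. norm (case_prod F z) \<le> norm (exp (c * t) * \<bar>g (fst z)\<bar>)"
    proof (rule AE_I2)
      fix z assume "z \<in> space (M \<Otimes>\<^sub>M M)"
      then have "snd z \<le> t" by (auto simp: space_pair_measure spM)
      then have "exp (c * snd z) \<le> exp (c * t)" using c by simp
      then show "norm (case_prod F z) \<le> norm (exp (c * t) * \<bar>g (fst z)\<bar>)"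
        unfolding F_def by (cases z) (auto simp: abs_mult intro!: mult_right_mono)
    qed
  qed
  have fub: "(\<integral>r. (\<integral>s. F s r \<partial>M) \<partial>M) = (\<integral>s. (\<integral>r. F s r \<partial>M) \<partial>M)"
    by (rule P.Fubini_integral[OF Fint])
  have conv: "integrable M h \<and> integral\<^sup>L M h = integral {0..t} h"
    if hm: "h \<in> borel_measurable M" and hb: "\<And>s. s \<in> {0..t} \<Longrightarrow> \<bar>h s\<bar> \<le> B * \<bar>g s\<bar> + B'" for h B B'
  proof -
    have "integrable M (\<lambda>s. B * \<bar>g s\<bar> + B')"
      using gint by auto
    then have hi: "integrable M h"
      by (rule Bochner_Integration.integrable_bound[OF _ hm]) (auto simp: spM intro!: AE_I2 order_trans[OF hb])
    then show ?thesis
      using lebesgue_integral_eq_integral[of "{0..t}" h] unfolding M_def by auto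
  qed
  have gconv: "integral\<^sup>L M g = integral {0..t} g"
    using conv[of g 1 0] gmeas by auto
  have contG: "continuous_on {0..t} (\<lambda>r. integral {0..r} g)"
    by (rule indefinite_integral_continuous_1) (use gi set_lebesgue_integral_eq_integral(1) in auto)
  have inner1: "(\<integral>s. F s r \<partial>M) = exp (c * r) * integral {0..r} g" if r: "r \<in> {0..t}" for r
  proof -
    have "(\<integral>s. F s r \<partial>M) = (\<integral>s. exp (c * r) * (if s \<le> r then g s else 0) \<partial>M)"
      unfolding F_def by (rule Bochner_Integration.integral_cong) auto
    also have "\<dots> = exp (c * r) * (\<integral>s. (if s \<le> r then g s else 0) \<partial>M)"
      by simp
    also have "(\<integral>s. (if s \<le> r then g s else 0) \<partial>M) = integral {0..t} (\<lambda>s. if s \<in> {..r} then g s else 0)"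
    proof -
      have "(\<lambda>s. if s \<le> r then g s else 0) \<in> borel_measurable M" by measurable
      from conv[OF this, of 1 0] show ?thesis by auto
    qed
    also have "\<dots> = integral {0..r} g"
    proof -
      have "{..r} \<inter> {0..t} = {0..r}" using r by auto
      then show ?thesis by (simp only: integral_restrict_Int)
    qed
    finally show ?thesis .
  qed
  have inner2: "(\<integral>r. F s r \<partial>M) = g s * ((exp (c * t) - exp (c * s)) / c)" if s: "s \<in> {0..t}" for s
  proof -
    have "(\<integral>r. F s r \<partial>M) = (\<integral>r. (if s \<le> r then exp (c * r) else 0) * g s \<partial>M)"
      unfolding F_def by (rule Bochner_Integration.integral_cong) auto
    also have "\<dots> = (\<integral>r. (if s \<le> r then exp (c * r) else 0) \<partial>M) * g s"
      by simp
    also have "(\<integral>r. (if s \<le> r then exp (c * r) else 0) \<partial>M) = integral {0..t} (\<lambda>r. if r \<in> {s..} then exp (c * r) else 0)"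
    proof -
      have "(\<lambda>r. if s \<le> r then exp (c * r) else 0) \<in> borel_measurable M" by measurable
      from conv[OF this, of 0 "exp (c * t)"] c show ?thesis by auto
    qed
    also have "\<dots> = integral {s..t} (\<lambda>r. exp (c * r))"
    proof -
      have "{s..} \<inter> {0..t} = {s..t}" using s by auto
      then show ?thesis by (simp only: integral_restrict_Int)
    qed
    also have "\<dots> = (exp (c * t) - exp (c * s)) / c"
    proof -
      have "((\<lambda>r. exp (c * r)) has_integral (exp (c * t) / c - exp (c * s) / c)) {s..t}"
        by (rule fundamental_theorem_of_calculus) (use s c in \<open>auto intro!: derivative_eq_intros simp: has_real_derivative_iff_has_vector_derivative[symmetric]\<close>)
      then show ?thesis by (simp add: integral_unique diff_divide_distrib)
    qed
    finally show ?thesis by simp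
  qed
  have L: "(\<integral>r. (\<integral>s. F s r \<partial>M) \<partial>M) = integral {0..t} (\<lambda>r. exp (c * r) * integral {0..r} g)"
  proof -
    have "(\<integral>r. (\<integral>s. F s r \<partial>M) \<partial>M) = (\<integral>r. exp (c * r) * integral {0..r} g \<partial>M)"
      by (rule Bochner_Integration.integral_cong) (auto simp: spM inner1)
    also have "\<dots> = integral {0..t} (\<lambda>r. exp (c * r) * integral {0..r} g)"
      unfolding M_def
      by (rule abs_int_integral_eq, rule absolutely_integrable_continuous_real)
         (intro continuous_intros contG)
    finally show ?thesis .
  qed
  have egi: "integrable M (\<lambda>s. exp (c * s) * g s) \<and> (\<integral>s. exp (c * s) * g s \<partial>M) = integral {0..t} (\<lambda>s. exp (c * s) * g s)"
    by (rule conv[of _ "exp (c * t)" 0]) (use c in \<open>auto simp: abs_mult intro!: mult_right_mono\<close>, measurable)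
  have R: "(\<integral>s. (\<integral>r. F s r \<partial>M) \<partial>M) = exp (c * t) / c * integral {0..t} g - integral {0..t} (\<lambda>s. exp (c * s) * g s) / c"
  proof -
    have "(\<integral>s. (\<integral>r. F s r \<partial>M) \<partial>M) = (\<integral>s. exp (c * t) / c * g s - (exp (c * s) * g s) / c \<partial>M)"
      by (rule Bochner_Integration.integral_cong) (use c in \<open>auto simp: spM inner2 field_simps\<close>)
    also have "\<dots> = (\<integral>s. exp (c * t) / c * g s \<partial>M) - (\<integral>s. (exp (c * s) * g s) / c \<partial>M)"
      by (rule Bochner_Integration.integral_diff) (use gint egi in auto)
    also have "\<dots> = exp (c * t) / c * integral {0..t} g - integral {0..t} (\<lambda>s. exp (c * s) * g s) / c"
      using gconv egi by simp
    finally show ?thesis .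
  qed
  from fub L R have "integral {0..t} (\<lambda>r. exp (c * r) * integral {0..r} g) = exp (c * t) / c * integral {0..t} g - integral {0..t} (\<lambda>s. exp (c * s) * g s) / c"
    using fub L R by argo
  then show ?thesis using c by (intro arith_aux) 
qed


lemma int_exp:
  fixes a b c :: real
  assumes "a \<le> b" "c > 0"
  shows "integral {a..b} (\<lambda>s. exp (c * s)) = (exp (c * b) - exp (c * a)) / c"
proof -
  have "((\<lambda>s. exp (c * s)) has_integral (exp (c * b) / c - exp (c * a) / c)) {a..b}"
  proof (rule fundamental_theorem_of_calculus[OF assms(1)])
    fix x assume "x \<in> {a..b}"
    have "((\<lambda>s. exp (c * s) / c) has_real_derivative exp (c * x)) (at x within {a..b})"
      using assms(2) by (auto intro!: derivative_eq_intros)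
    then show "((\<lambda>s. exp (c * s) / c) has_vector_derivative exp (c * x)) (at x within {a..b})"
      by (simp add: has_real_derivative_iff_has_vector_derivative)
  qed
  then show ?thesis by (simp add: integral_unique diff_divide_distrib)
qed

lemma expneg_lim:
  fixes c H :: real
  assumes "c > 0"
  shows "((\<lambda>t. exp (- c * t) * H) \<longlongrightarrow> 0) at_top"
proof -
  have "filterlim (\<lambda>t. - c * t) at_bot at_top"
    by (rule filterlim_tendsto_neg_mult_at_bot[OF tendsto_const _ filterlim_ident]) (use assms in simp)
  then have "((\<lambda>t. exp (- c * t)) \<longlongrightarrow> 0) at_top"
    by (rule filterlim_compose[OF exp_at_bot])
  from tendsto_mult[OF this tendsto_const, of H] show ?thesis by simp
qed

lemma conv_tendsto_zero:
  fixes u :: "real \<Rightarrow> real" and c :: real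
  assumes c: "c > 0" and cont: "\<And>T. continuous_on {0..T} u" and lim: "(u \<longlongrightarrow> 0) at_top"
  shows "((\<lambda>t. exp (- c * t) * integral {0..t} (\<lambda>s. exp (c * s) * u s)) \<longlongrightarrow> 0) at_top"
  unfolding tendsto_iff
proof (intro allI impI)
  fix e :: real assume e: "e > 0"
  have "\<forall>\<^sub>F s in at_top. dist (u s) 0 < e * c / 2"
    using lim[unfolded tendsto_iff, rule_format, of "e * c / 2"] e c by simp
  then obtain T0' where T0': "\<And>s. s \<ge> T0' \<Longrightarrow> \<bar>u s\<bar> < e * c / 2"
    by (auto simp: eventually_at_top_linorder)
  define T0 where "T0 = max 0 T0'"
  have T0: "T0 \<ge> 0" "\<And>s. s \<ge> T0 \<Longrightarrow> \<bar>u s\<bar> < e * c / 2"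
    using T0' unfolding T0_def by auto
  have ci: "(\<lambda>s. exp (c * s) * u s) integrable_on {a..b}" if "0 \<le> a" for a b
    by (intro integrable_continuous_interval continuous_intros continuous_on_subset[OF cont[of b]]) (use that in auto)
  have ci0: "(\<lambda>s. exp (c * s) * u s) integrable_on {0..b}" for b
    using ci[of 0 b] by simp
  have cia: "(\<lambda>s. exp (c * s) * \<bar>u s\<bar>) integrable_on {0..T0}"
    by (intro integrable_continuous_interval continuous_intros cont)
  define H where "H = integral {0..T0} (\<lambda>s. exp (c * s) * \<bar>u s\<bar>)"
  have "\<forall>\<^sub>F t in at_top. dist (exp (- c * t) * H) 0 < e / 2"
    using expneg_lim[OF c, of H, unfolded tendsto_iff, rule_format, of "e / 2"] e by simp
  moreover have "\<forall>\<^sub>F t in at_top. t \<ge> T0" by (rule eventually_ge_at_top)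
  ultimately show "\<forall>\<^sub>F t in at_top. dist (exp (- c * t) * integral {0..t} (\<lambda>s. exp (c * s) * u s)) 0 < e"
  proof eventually_elim
    case (elim t)
    then have t: "t \<ge> T0" and Ht: "\<bar>exp (- c * t) * H\<bar> < e / 2" by auto
    have split: "integral {0..t} (\<lambda>s. exp (c * s) * u s) =
        integral {0..T0} (\<lambda>s. exp (c * s) * u s) + integral {T0..t} (\<lambda>s. exp (c * s) * u s)"
      using Henstock_Kurzweil_Integration.integral_combine[OF T0(1) t ci0] by simp
    have b1: "\<bar>integral {0..T0} (\<lambda>s. exp (c * s) * u s)\<bar> \<le> H"
    proof -
      have "norm (integral {0..T0} (\<lambda>s. exp (c * s) * u s)) \<le> H"
        unfolding H_def
        by (rule Henstock_Kurzweil_Integration.integral_norm_bound_integral[OF ci0 cia]) (simp add: abs_mult)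
      then show ?thesis by simp
    qed
    have ei: "(\<lambda>s. exp (c * s) * (e * c / 2)) integrable_on {T0..t}"
      by (intro integrable_continuous_interval continuous_intros)
    have "norm (integral {T0..t} (\<lambda>s. exp (c * s) * u s)) \<le> integral {T0..t} (\<lambda>s. exp (c * s) * (e * c / 2))"
    proof (rule Henstock_Kurzweil_Integration.integral_norm_bound_integral[OF ci[OF T0(1)] ei])
      fix s assume "s \<in> {T0..t}"
      then have "\<bar>u s\<bar> \<le> e * c / 2" using T0(2)[of s] by auto
      then show "norm (exp (c * s) * u s) \<le> exp (c * s) * (e * c / 2)"
        by (simp add: abs_mult)
    qed
    then have "\<bar>integral {T0..t} (\<lambda>s. exp (c * s) * u s)\<bar> \<le> integral {T0..t} (\<lambda>s. exp (c * s) * (e * c / 2))"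
      by simp
    also have "\<dots> = (exp (c * t) - exp (c * T0)) / c * (e * c / 2)"
      using int_exp[OF t c] by simp
    also have "\<dots> = (exp (c * t) - exp (c * T0)) * (e / 2)"
      using c by simp
    also have "\<dots> \<le> exp (c * t) * (e / 2)"
      using e by (intro mult_right_mono) auto
    finally have b2: "\<bar>integral {T0..t} (\<lambda>s. exp (c * s) * u s)\<bar> \<le> exp (c * t) * (e / 2)" .
    have "\<bar>integral {0..t} (\<lambda>s. exp (c * s) * u s)\<bar> \<le> H + exp (c * t) * (e / 2)"
      unfolding split using b1 b2 by linarith
    then have "exp (- c * t) * \<bar>integral {0..t} (\<lambda>s. exp (c * s) * u s)\<bar> \<le> exp (- c * t) * (H + exp (c * t) * (e / 2))"
      by (intro mult_left_mono) auto
    also have "\<dots> = exp (- c * t) * H + e / 2"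
      by (simp add: algebra_simps exp_minus field_simps)
    finally have X: "exp (- c * t) * \<bar>integral {0..t} (\<lambda>s. exp (c * s) * u s)\<bar> \<le> exp (- c * t) * H + e / 2" .
    have Y: "exp (- c * t) * H \<le> \<bar>exp (- c * t) * H\<bar>" by (rule abs_ge_self)
    have "dist (exp (- c * t) * integral {0..t} (\<lambda>s. exp (c * s) * u s)) 0 = exp (- c * t) * \<bar>integral {0..t} (\<lambda>s. exp (c * s) * u s)\<bar>"
      by (simp add: abs_mult)
    then show ?case using X Y Ht by linarith
  qed
qed


lemma cont_bound:
  fixes h :: "real \<Rightarrow> real"
  assumes "continuous_on {a..b} h"
  obtains B where "\<And>s. s \<in> {a..b} \<Longrightarrow> \<bar>h s\<bar> \<le> B"
proof -
  have "bounded (h ` {a..b})"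
    by (rule compact_imp_bounded, rule compact_continuous_image[OF assms compact_Icc])
  then obtain B where "\<forall>y\<in>h ` {a..b}. norm y \<le> B" unfolding bounded_iff by blast
  then have "\<And>s. s \<in> {a..b} \<Longrightarrow> \<bar>h s\<bar> \<le> B" by auto
  then show ?thesis by (rule that)
qed

lemma arith2:
  fixes A X Y F D B H :: real
  shows "X \<le> F + D \<Longrightarrow> Y \<le> B \<Longrightarrow> D \<le> 1/2 * A + H \<Longrightarrow> A \<le> X + Y \<Longrightarrow> A \<le> 2 * (B + F + H)"
  by argo

lemma integrability:
  fixes p x x' f :: "real \<Rightarrow> real" and k L T :: real
  assumes pc: "continuous_on {0..} p"
    and pb: "\<And>t. t \<ge> 0 \<Longrightarrow> \<bar>p t\<bar> \<le> L"
    and f_loc: "\<And>T. T \<ge> 0 \<Longrightarrow> f absolutely_integrable_on {0..T}"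
    and xc: "continuous_on {0..} x"
    and x'm: "\<And>T. x' \<in> borel_measurable (lebesgue_on {0..T})"
    and x'_eq: "\<And>t. t \<ge> 0 \<Longrightarrow> x' t = x' 0 + integral {0..t} (\<lambda>s. f s - p s * x' s - k * x s)"
    and T: "T \<ge> 0"
  shows "(\<lambda>s. f s - p s * x' s - k * x s) integrable_on {0..T}"
proof (rule ccontr)
  define g where "g = (\<lambda>s. f s - p s * x' s - k * x s)"
  define S where "S = {T. T \<ge> 0 \<and> \<not> g integrable_on {0..T}}"
  assume "\<not> ?thesis"
  then have TS: "T \<in> S" using T unfolding S_def g_def by auto
  have Sne: "S \<noteq> {}" using TS by auto
  have bdd: "bdd_below S" unfolding S_def by (auto intro: bdd_belowI[of _ 0])
  define a where "a = Inf S"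
  have a0: "a \<ge> 0" unfolding a_def using Sne by (intro cInf_greatest) (auto simp: S_def)
  have L0: "L \<ge> 0" using pb[of 0] by simp
  have below: "g integrable_on {0..t}" if "0 \<le> t" "t < a" for t
  proof (rule ccontr)
    assume "\<not> ?thesis" then have "t \<in> S" using that unfolding S_def by auto
    then have "a \<le> t" unfolding a_def using bdd by (rule cInf_lower)
    then show False using that by simp
  qed
  have above: "\<not> g integrable_on {0..t}" if "t > a" for t
  proof
    assume gi: "g integrable_on {0..t}"
    from that obtain s where "s \<in> S" "s < t" using cInf_less_iff[OF Sne bdd] unfolding a_def by auto
    then have "g integrable_on {0..s}" using integrable_subinterval_real[OF gi] by auto
    with \<open>s \<in> S\<close> show False unfolding S_def by auto
  qed
  have x'const: "x' t = x' 0" if "t > a" for t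
    using x'_eq[of t] above[OF that] a0 that unfolding g_def by (simp add: not_integrable_integral)
  have x'eqg: "x' t = x' 0 + integral {0..t} g" if "t \<ge> 0" for t
    using x'_eq[OF that] unfolding g_def by simp
  have x'cont: "continuous_on {0..b} x'" if "g integrable_on {0..b}" for b
  proof -
    have "continuous_on {0..b} (\<lambda>t. x' 0 + integral {0..t} g)"
      by (rule continuous_on_add[OF continuous_on_const indefinite_integral_continuous_1[OF that]])
    then show ?thesis by (rule continuous_on_eq) (simp add: x'eqg[symmetric])
  qed
  have fa: "f absolutely_integrable_on {0..a}" using f_loc a0 by auto
  have fai: "f integrable_on {0..a}" and faa: "(\<lambda>s. \<bar>f s\<bar>) integrable_on {0..a}"
    using fa unfolding absolutely_integrable_on_def by auto
  define Fa where "Fa = integral {0..a} (\<lambda>s. \<bar>f s\<bar>)"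
  obtain Bx where Bx: "\<And>s. s \<in> {0..a} \<Longrightarrow> \<bar>x s\<bar> \<le> Bx"
  proof -
    have "continuous_on {0..a} x" by (rule continuous_on_subset[OF xc]) auto
    from cont_bound[OF this] that show ?thesis by blast
  qed
  have Bx0: "Bx \<ge> 0" using Bx[of 0] a0 by auto
  define \<delta> where "\<delta> = min (a / 2) (1 / (2 * L + 2))"
  have d0: "\<delta> \<ge> 0" unfolding \<delta>_def using a0 L0 by auto
  have Ld: "L * \<delta> \<le> 1 / 2"
  proof -
    have "L * \<delta> \<le> L * (1 / (2 * L + 2))" unfolding \<delta>_def using L0 by (intro mult_left_mono) auto
    also have "\<dots> \<le> 1 / 2" using L0 by (simp add: field_simps)
    finally show ?thesis .
  qed
  define c0 where "c0 = a - \<delta>"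
  have c0: "0 \<le> c0" "c0 \<le> a" unfolding c0_def \<delta>_def using a0 L0 by auto
  have gc0: "g integrable_on {0..c0}"
  proof (cases "c0 < a")
    case True then show ?thesis using below c0 by auto
  next
    case False then have "c0 = 0" using c0 \<delta>_def c0_def L0 by (auto simp: min_def split: if_splits)
    then show ?thesis by (metis integrable_on_refl cbox_interval)
  qed
  obtain B0 where B0: "\<And>s. s \<in> {0..c0} \<Longrightarrow> \<bar>x' s\<bar> \<le> B0"
    using cont_bound[OF x'cont[OF gc0]] by blast
  have B00: "B0 \<ge> 0" using B0[of 0] c0 by auto
  define K where "K = B0 + Fa + \<bar>k\<bar> * Bx * \<delta>"
  have mid: "\<bar>x' s\<bar> \<le> 2 * K" if s: "c0 \<le> s" "s < a" for s
  proof -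
    have gs: "g integrable_on {0..s}" using below s c0 by auto
    have "continuous_on {c0..s} (\<lambda>y. \<bar>x' y\<bar>)"
      by (intro continuous_on_rabs continuous_on_subset[OF x'cont[OF gs]]) (use c0 in auto)
    then have "\<exists>m\<in>{c0..s}. \<forall>y\<in>{c0..s}. \<bar>x' y\<bar> \<le> \<bar>x' m\<bar>"
      using continuous_attains_sup[of "{c0..s}" "\<lambda>y. \<bar>x' y\<bar>"] s by auto
    then obtain m where m: "m \<in> {c0..s}" and mmax: "\<And>y. y \<in> {c0..s} \<Longrightarrow> \<bar>x' y\<bar> \<le> \<bar>x' m\<bar>"
      by blast
    have gm: "g integrable_on {0..m}" using integrable_subinterval_real[OF gs] m by auto
    have gcm: "g integrable_on {c0..m}" using integrable_subinterval_real[OF gs] m c0 by auto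
    have fcm: "(\<lambda>s. \<bar>f s\<bar>) integrable_on {c0..m}" using integrable_subinterval_real[OF faa] m c0 s by auto
    have diff: "x' m - x' c0 = integral {c0..m} g"
      using x'eqg[of m] x'eqg[of c0] Henstock_Kurzweil_Integration.integral_combine[OF c0(1) _ gm] m c0
      by auto
    define C where "C = L * \<bar>x' m\<bar> + \<bar>k\<bar> * Bx"
    have C0: "C \<ge> 0" unfolding C_def using L0 Bx0 by auto
    have "norm (integral {c0..m} g) \<le> integral {c0..m} (\<lambda>y. \<bar>f y\<bar> + C)"
    proof (rule Henstock_Kurzweil_Integration.integral_norm_bound_integral[OF gcm integrable_add[OF fcm integrable_const_ivl]])
      fix y assume y: "y \<in> {c0..m}"
      then have y0: "y \<in> {0..a}" "y \<ge> 0" using c0 m s by auto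
      have "\<bar>p y * x' y\<bar> \<le> L * \<bar>x' m\<bar>"
        unfolding abs_mult using pb[OF y0(2)] mmax[of y] y m by (intro mult_mono) auto
      moreover have "\<bar>k * x y\<bar> \<le> \<bar>k\<bar> * Bx"
        unfolding abs_mult using Bx[OF y0(1)] by (intro mult_left_mono) auto
      ultimately show "norm (g y) \<le> \<bar>f y\<bar> + C"
        unfolding g_def C_def by auto
    qed
    also have "\<dots> = integral {c0..m} (\<lambda>y. \<bar>f y\<bar>) + (m - c0) * C"
      using m by (simp add: integral_add[OF fcm integrable_const_ivl])
    also have "\<dots> \<le> Fa + \<delta> * C"
    proof (rule add_mono)
      show "integral {c0..m} (\<lambda>y. \<bar>f y\<bar>) \<le> Fa"
        unfolding Fa_def by (rule integral_subset_le) (use fcm faa c0 m s in auto)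
      show "(m - c0) * C \<le> \<delta> * C"
        using C0 m s unfolding c0_def by (intro mult_right_mono) auto
    qed
    finally have "\<bar>x' m - x' c0\<bar> \<le> Fa + \<delta> * C" using diff by simp
    moreover have "\<bar>x' c0\<bar> \<le> B0" using B0 c0 by auto
    moreover have "\<delta> * C \<le> 1/2 * \<bar>x' m\<bar> + \<bar>k\<bar> * Bx * \<delta>"
    proof -
      have "\<delta> * (L * \<bar>x' m\<bar>) \<le> 1/2 * \<bar>x' m\<bar>"
        using Ld by (metis abs_ge_zero mult.assoc mult.commute mult_right_mono)
      then show ?thesis unfolding C_def by (simp add: algebra_simps)
    qed
    moreover have "\<bar>x' m\<bar> \<le> \<bar>x' m - x' c0\<bar> + \<bar>x' c0\<bar>"
      using abs_triangle_ineq[of "x' m - x' c0" "x' c0"] by simp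
    ultimately have "\<bar>x' m\<bar> \<le> 2 * K" unfolding K_def by (rule arith2)
    moreover have "\<bar>x' s\<bar> \<le> \<bar>x' m\<bar>" using mmax[of s] s by auto
    ultimately show ?thesis by linarith
  qed
  define Mx where "Mx = max B0 (2 * K) + \<bar>x' a\<bar>"
  have bnd: "\<bar>x' s\<bar> \<le> Mx" if s: "s \<in> {0..a}" for s
  proof -
    consider "s \<le> c0" | "c0 \<le> s" "s < a" | "s = a" using s by fastforce
    then show ?thesis
    proof cases
      case 1 then show ?thesis using B0[of s] s unfolding Mx_def by auto
    next
      case 2 then show ?thesis using mid[of s] unfolding Mx_def by auto
    next
      case 3 then show ?thesis using B00 unfolding Mx_def by auto
    qed
  qed
  have px'int: "(\<lambda>s. p s * x' s) absolutely_integrable_on {0..a}"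
  proof (rule measurable_bounded_by_integrable_imp_absolutely_integrable)
    have "p \<in> borel_measurable (lebesgue_on {0..a})"
      by (rule continuous_imp_measurable_on_sets_lebesgue) (auto intro: continuous_on_subset[OF pc])
    then show "(\<lambda>s. p s * x' s) \<in> borel_measurable (lebesgue_on {0..a})"
      using x'm by measurable
    show "{0..a} \<in> sets lebesgue" by simp
    show "(\<lambda>_. L * Mx) integrable_on {0..a}" by (rule integrable_const_ivl)
    fix s assume "s \<in> {0..a}"
    then show "norm (p s * x' s) \<le> L * Mx"
      unfolding real_norm_def abs_mult using pb[of s] bnd[of s] L0 by (intro mult_mono) auto
  qed
  have ga: "g integrable_on {0..a}"
    unfolding g_def
    by (intro integrable_diff fai integrable_continuous_interval continuous_intros
        continuous_on_subset[OF xc] set_lebesgue_integral_eq_integral(1)[OF px'int]) auto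
  have gaa: "g integrable_on {a..a+1}"
  proof (rule integrable_spike_finite[of "{a}"])
    show "finite {a}" by simp
    show "g s = f s - p s * x' 0 - k * x s" if "s \<in> {a..a+1} - {a}" for s
      using that x'const[of s] unfolding g_def by auto
    have "f integrable_on {a..a+1}"
      using f_loc[of "a+1"] a0 unfolding absolutely_integrable_on_def
      by (auto intro: integrable_subinterval_real)
    moreover have "(\<lambda>s. p s * x' 0) integrable_on {a..a+1}"
      by (intro integrable_continuous_interval continuous_on_mult continuous_on_const
        continuous_on_subset[OF pc]) (use a0 in auto)
    moreover have "(\<lambda>s. k * x s) integrable_on {a..a+1}"
      by (intro integrable_continuous_interval continuous_on_mult continuous_on_const
        continuous_on_subset[OF xc]) (use a0 in auto)
    ultimately show "(\<lambda>s. f s - p s * x' 0 - k * x s) integrable_on {a..a+1}"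
      by (intro integrable_diff)
  qed
  have "g integrable_on {0..a+1}"
    by (rule Henstock_Kurzweil_Integration.integrable_combine[OF a0 _ ga gaa]) simp
  then show False using above[of "a+1"] by simp
qed

lemma arith4:
  fixes E Ec I A H y c X U :: real
  assumes "E * Ec = 1" "I = E * (A + H)" "A = Ec * y - c * X" "U = H - c * X"
  shows "I = y + E * U"
proof -
  have "I = E * Ec * y + E * (H - c * X)" using assms(2,3) by (simp add: algebra_simps)
  then show ?thesis using assms(1,4) by simp
qed

lemma deriv_measurable:
  fixes x x' :: "real \<Rightarrow> real"
  assumes xd: "\<And>t. t \<ge> 0 \<Longrightarrow> (x has_real_derivative x' t) (at t within {0..})"
    and xc: "continuous_on {0..} x"
  shows "x' \<in> borel_measurable (lebesgue_on {0..T})"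
proof (rule borel_measurable_LIMSEQ_real)
  define u where "u = (\<lambda>n::nat. \<lambda>s. (x (s + inverse (real (Suc n))) - x s) * real (Suc n))"
  show "(\<lambda>n. u n s) \<longlonglongrightarrow> x' s" if "s \<in> space (lebesgue_on {0..T})" for s
  proof -
    have s: "s \<ge> 0" using that by auto
    have lim: "((\<lambda>y. (x y - x s) / (y - s)) \<longlongrightarrow> x' s) (at s within {0..})"
      using xd[OF s] by (simp add: has_field_derivative_iff)
    define y where "y = (\<lambda>n::nat. s + inverse (real (Suc n)))"
    have "filterlim y (at s within {0..}) sequentially"
      unfolding filterlim_at
    proof
      show "\<forall>\<^sub>F n in sequentially. y n \<in> {0..} \<and> y n \<noteq> s"
        using s unfolding y_def by (auto intro!: always_eventually add_nonneg_nonneg)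
      show "y \<longlonglongrightarrow> s"
        unfolding y_def using tendsto_add[OF tendsto_const LIMSEQ_inverse_real_of_nat, of s] by simp
    qed
    from filterlim_compose[OF lim this]
    have "(\<lambda>n. (x (y n) - x s) / (y n - s)) \<longlonglongrightarrow> x' s" by simp
    moreover have "(x (y n) - x s) / (y n - s) = u n s" for n
      unfolding y_def u_def by (simp add: divide_inverse)
    ultimately show ?thesis by simp
  qed
  show "u n \<in> borel_measurable (lebesgue_on {0..T})" for n
  proof (rule continuous_imp_measurable_on_sets_lebesgue)
    have "continuous_on {0..T} (\<lambda>s. x (s + inverse (real (Suc n))))"
      by (rule continuous_on_compose2[OF xc]) (auto intro!: continuous_intros)
    moreover have "continuous_on {0..T} x" by (rule continuous_on_subset[OF xc]) auto
    ultimately show "continuous_on {0..T} (u n)"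
      unfolding u_def by (intro continuous_on_mult continuous_on_diff continuous_on_const)
    show "{0..T} \<in> sets lebesgue" by simp
  qed
qed

theorem mainTheorem4:
  fixes \<omega> :: real and p p' f x x' :: "real \<Rightarrow> real"
  assumes omega_pos: "\<omega> > 0"
    and p_deriv: "\<And>t. t \<ge> 0 \<Longrightarrow> (p has_real_derivative p' t) (at t within {0..})"
    and p'_cont: "continuous_on {0..} p'"
    and p_pos: "\<And>t. t \<ge> 0 \<Longrightarrow> p t > 0"
    and p'_neg: "\<And>t. t \<ge> 0 \<Longrightarrow> p' t < 0"
    and p_int_infty: "filterlim (\<lambda>T. integral {0..T} p) at_top at_top"
    and p_sq_int: "(\<lambda>t. (p t)\<^sup>2) integrable_on {0..}"
    and f_loc: "\<And>T. T \<ge> 0 \<Longrightarrow> f absolutely_integrable_on {0..T}"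
    and x_deriv: "\<And>t. t \<ge> 0 \<Longrightarrow> (x has_real_derivative x' t) (at t within {0..})"
    and x'_eq: "\<And>t. t \<ge> 0 \<Longrightarrow>
        x' t = x' 0 + integral {0..t} (\<lambda>s. f s - p s * x' s - \<omega>\<^sup>2 * x s)"
    and x0: "x 0 = 0"
    and x'0: "x' 0 = 0"
    and x_lim: "(x \<longlongrightarrow> 0) at_top"
    and x'_lim: "(x' \<longlongrightarrow> 0) at_top"
  shows "((\<lambda>t. integral {0..t} (\<lambda>s. exp (- (\<omega>\<^sup>2) * (t - s)) * f s)) \<longlongrightarrow> 0) at_top"
proof -
  define c where "c = \<omega>\<^sup>2"
  have c: "c > 0" unfolding c_def using omega_pos by simp
  have xc: "continuous_on {0..} x"
    unfolding continuous_on_eq_continuous_within by (auto intro!: DERIV_continuous[OF x_deriv])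
  have pc: "continuous_on {0..} p"
    unfolding continuous_on_eq_continuous_within by (auto intro!: DERIV_continuous[OF p_deriv])
  have pdec: "p t \<le> p 0" if t: "t \<ge> 0" for t
  proof (rule DERIV_nonpos_imp_decreasing_open[OF t])
    fix y assume y: "0 < y" "y < t"
    have "(p has_real_derivative p' y) (at y within {0<..})"
      by (rule DERIV_subset[OF p_deriv]) (use y in auto)
    then have "(p has_real_derivative p' y) (at y)"
      using at_within_open[of y "{0<..}"] y by simp
    then show "\<exists>z. (p has_real_derivative z) (at y) \<and> z \<le> 0"
      using p'_neg[of y] y by (intro exI[of _ "p' y"]) auto
  qed (rule continuous_on_subset[OF pc], auto)
  have pb: "\<bar>p t\<bar> \<le> p 0" if "t \<ge> 0" for t
    using pdec[OF that] p_pos[OF that] by simp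
  have x'm: "x' \<in> borel_measurable (lebesgue_on {0..T})" for T
    by (rule deriv_measurable[OF x_deriv xc])
  define g where "g = (\<lambda>s. f s - p s * x' s - \<omega>\<^sup>2 * x s)"
  have gi: "g integrable_on {0..T}" if "T \<ge> 0" for T
    unfolding g_def by (rule integrability[OF pc pb f_loc xc x'm x'_eq that])
  have x'eq: "x' t = integral {0..t} g" if "t \<ge> 0" for t
    using x'_eq[OF that] x'0 unfolding g_def by simp
  have x'c: "continuous_on {0..T} x'" for T
  proof (cases "T \<ge> 0")
    case True
    show ?thesis
      by (rule continuous_on_eq[OF indefinite_integral_continuous_1[OF gi[OF True]]]) (simp add: x'eq)
  next
    case False then have "{0..T} = {}" by auto
    then show ?thesis by simp
  qed
  have xcT: "continuous_on {0..T} x" for T by (rule continuous_on_subset[OF xc]) auto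
  have pcT: "continuous_on {0..T} p" for T by (rule continuous_on_subset[OF pc]) auto
  have gabs: "g absolutely_integrable_on {0..T}" if T: "T \<ge> 0" for T
  proof -
    have "(\<lambda>s. p s * x' s) absolutely_integrable_on {0..T}"
      by (intro absolutely_integrable_continuous_real continuous_on_mult pcT x'c)
    moreover have "(\<lambda>s. \<omega>\<^sup>2 * x s) absolutely_integrable_on {0..T}"
      by (intro absolutely_integrable_continuous_real continuous_on_mult continuous_on_const xcT)
    ultimately show ?thesis unfolding g_def
      using f_loc[OF T] by (intro set_integral_diff(1))
  qed
  define u where "u = (\<lambda>s. p s * x' s + c * x s - c * x' s)"
  have uc: "continuous_on {0..T} u" for T
    unfolding u_def by (intro continuous_on_add continuous_on_diff continuous_on_mult continuous_on_const pcT xcT x'c)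
  have ulim: "(u \<longlongrightarrow> 0) at_top"
  proof -
    have "((\<lambda>s. p s * x' s) \<longlongrightarrow> 0) at_top"
    proof (rule Lim_null_comparison)
      show "\<forall>\<^sub>F s in at_top. norm (p s * x' s) \<le> p 0 * \<bar>x' s\<bar>"
        using eventually_ge_at_top[of "0::real"]
        by eventually_elim (auto simp: abs_mult intro!: mult_right_mono pb)
      show "((\<lambda>s. p 0 * \<bar>x' s\<bar>) \<longlongrightarrow> 0) at_top"
        using tendsto_mult[OF tendsto_const tendsto_rabs[OF x'_lim], of "p 0"] by simp
    qed
    then have "((\<lambda>s. p s * x' s + c * x s - c * x' s) \<longlongrightarrow> 0 + c * 0 - c * 0) at_top"
      by (intro tendsto_intros x_lim x'_lim)
    then show ?thesis unfolding u_def by simp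
  qed
  have B: "((\<lambda>t. exp (- c * t) * integral {0..t} (\<lambda>s. exp (c * s) * u s)) \<longlongrightarrow> 0) at_top"
    by (rule conv_tendsto_zero[OF c uc ulim])
  have key: "integral {0..t} (\<lambda>s. exp (- (\<omega>\<^sup>2) * (t - s)) * f s) =
      x' t + exp (- c * t) * integral {0..t} (\<lambda>s. exp (c * s) * u s)" if t: "t \<ge> 0" for t
  proof -
    have ibp: "integral {0..t} (\<lambda>s. exp (c * s) * g s) =
       exp (c * t) * x' t - c * integral {0..t} (\<lambda>r. exp (c * r) * x' r)"
    proof -
      have "integral {0..t} (\<lambda>r. exp (c * r) * integral {0..r} g) = integral {0..t} (\<lambda>r. exp (c * r) * x' r)"
        by (rule integral_cong) (simp add: x'eq)
      then show ?thesis using ibp_exp[OF c t gabs[OF t]] x'eq[OF t] by simp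
    qed
    have eg: "(\<lambda>s. exp (c * s) * g s) integrable_on {0..t}"
    proof -
      have "(\<lambda>s. exp (c * s) * g s) absolutely_integrable_on {0..t}"
      proof (rule absolutely_integrable_bounded_measurable_product_real)
        show "(\<lambda>s. exp (c * s)) \<in> borel_measurable (lebesgue_on {0..t})"
          by (rule continuous_imp_measurable_on_sets_lebesgue) (intro continuous_on_exp continuous_on_mult continuous_on_const continuous_on_id, simp)
        show "{0..t} \<in> sets lebesgue" by simp
        show "bounded ((\<lambda>s. exp (c * s)) ` {0..t})"
          by (rule compact_imp_bounded, rule compact_continuous_image)
             (intro continuous_on_exp continuous_on_mult continuous_on_const continuous_on_id, simp)
        show "g absolutely_integrable_on {0..t}" by (rule gabs[OF t])
      qed
      then show ?thesis using set_lebesgue_integral_eq_integral(1) by blast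
    qed
    have eh: "(\<lambda>s. exp (c * s) * (p s * x' s + c * x s)) integrable_on {0..t}"
      by (intro integrable_continuous_interval continuous_on_mult continuous_on_add continuous_on_exp
          continuous_on_const continuous_on_id pcT xcT x'c)
    have ex': "(\<lambda>s. exp (c * s) * x' s) integrable_on {0..t}"
      by (intro integrable_continuous_interval continuous_on_mult continuous_on_exp
          continuous_on_const continuous_on_id x'c)
    have "integral {0..t} (\<lambda>s. exp (- (\<omega>\<^sup>2) * (t - s)) * f s) =
        integral {0..t} (\<lambda>s. exp (- c * t) * (exp (c * s) * g s + exp (c * s) * (p s * x' s + c * x s)))"
    proof (rule integral_cong)
      fix s
      have "exp (- (\<omega>\<^sup>2) * (t - s)) = exp (- c * t) * exp (c * s)"
        unfolding c_def by (simp add: exp_add[symmetric] algebra_simps)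
      then show "exp (- (\<omega>\<^sup>2) * (t - s)) * f s = exp (- c * t) * (exp (c * s) * g s + exp (c * s) * (p s * x' s + c * x s))"
        unfolding g_def c_def by (simp add: algebra_simps)
    qed
    also have "\<dots> = exp (- c * t) * (integral {0..t} (\<lambda>s. exp (c * s) * g s) + integral {0..t} (\<lambda>s. exp (c * s) * (p s * x' s + c * x s)))"
      by (simp add: Henstock_Kurzweil_Integration.integral_add[OF eg eh])
    finally have E1: "integral {0..t} (\<lambda>s. exp (- (\<omega>\<^sup>2) * (t - s)) * f s) = exp (- c * t) * (integral {0..t} (\<lambda>s. exp (c * s) * g s) + integral {0..t} (\<lambda>s. exp (c * s) * (p s * x' s + c * x s)))" .
    have E2: "integral {0..t} (\<lambda>s. exp (c * s) * u s) = integral {0..t} (\<lambda>s. exp (c * s) * (p s * x' s + c * x s)) - c * integral {0..t} (\<lambda>s. exp (c * s) * x' s)"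
    proof -
      have "integral {0..t} (\<lambda>s. exp (c * s) * u s) = integral {0..t} (\<lambda>s. exp (c * s) * (p s * x' s + c * x s) - c * (exp (c * s) * x' s))"
        by (rule integral_cong) (simp add: u_def algebra_simps)
      also have "\<dots> = integral {0..t} (\<lambda>s. exp (c * s) * (p s * x' s + c * x s)) - integral {0..t} (\<lambda>s. c * (exp (c * s) * x' s))"
        by (rule Henstock_Kurzweil_Integration.integral_diff[OF eh])
           (intro integrable_continuous_interval continuous_on_mult continuous_on_exp
            continuous_on_const continuous_on_id x'c)
      finally show ?thesis by simp
    qed
    have "exp (- c * t) * exp (c * t) = 1" by (simp add: exp_add[symmetric])
    from arith4[OF this E1 ibp E2] show ?thesis .
  qed
  have lim: "((\<lambda>t. x' t + exp (- c * t) * integral {0..t} (\<lambda>s. exp (c * s) * u s)) \<longlongrightarrow> 0) at_top"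
    using tendsto_add[OF x'_lim B] by simp
  have ev: "\<forall>\<^sub>F t in at_top. x' t + exp (- c * t) * integral {0..t} (\<lambda>s. exp (c * s) * u s) =
      integral {0..t} (\<lambda>s. exp (- (\<omega>\<^sup>2) * (t - s)) * f s)"
    using eventually_ge_at_top[of "0::real"] by eventually_elim (rule key[symmetric])
  show ?thesis by (rule Lim_transform_eventually[OF lim ev])
qed
end
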